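(* Let $\alpha>0$, $t_0>0$, $x_0\in\mathcal H$, and let $x$ be a solution of the Cauchy problem $$\tfrac{\alpha}{t}\dot x(t)+\operatorname{proj}_{C(x(t))+\ddot x(t)}(0)=0\ (t>t_0),\qquad x(t_0)=x_0,\ \dot x(t_0)=0 .$$ Let $\mathcal W_i(t)=f_i(x(t))+\frac12\|\dot x(t)\|^2$, and for $z\in\mathcal H$ let $h_z(t)=\frac12\|x(t)-z\|^2$ and $C_z=(\alpha+1)\frac{1}{t_0^2}h_z(t_0)+\frac{3}{2\alpha}\max_{i}\big(f_i(x_0)-f_i(z)\big)$. Then there exist constants $A,B\in\mathbb R$, independent of $z$, such that for all $z\in\mathcal H$ and all $\tau>t_0$, $$\min_{i=1,\dots,m}\big(\mathcal W_i(\tau)-f_i(z)\big)\,\big[\tau\ln\tau+A\tau+B\big]\le C_z(\tau-t_0)+\frac{h_z(t_0)}{t_0}.$$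
   Context: $\mathcal H$ is a real Hilbert space. $f_1,\dots,f_m:\mathcal H\to\mathbb R$ are convex and continuously differentiable. $C(x)=\operatorname{co}\{\nabla f_i(x):i=1,\dots,m\}$. For a closed convex $K$, $\operatorname{proj}_K(y)=\arg\min_{w\in K}\|w-y\|^2$. A solution of the Cauchy problem is a function $x:[t_0,+\infty)\to\mathcal H$ such that: $x\in C^1([t_0,+\infty))$; $\dot x$ is absolutely continuous on $[t_0,T]$ for every $T\ge t_0$; there is a Bochner measurable $\ddot x$ with $\dot x(t)=\dot x(t_0)+\int_{t_0}^t\ddot x(s)\,ds$ for all $t$, and $\frac{d}{dt}\dot x=\ddot x$ a.e.; the equation holds for almost all $t\ge t_0$; and the initial conditions hold. *)

theory Defs
  imports "HOL-Analysis.Analysis"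
begin

definition proj :: "'a::real_inner set \<Rightarrow> 'a \<Rightarrow> 'a" where
  "proj K y = (SOME w. w \<in> K \<and> (\<forall>v\<in>K. (norm (w - y)) ^ 2 \<le> (norm (v - y)) ^ 2))"

definition abs_continuous_on :: "real \<Rightarrow> real \<Rightarrow> (real \<Rightarrow> 'a::real_normed_vector) \<Rightarrow> bool" where
  "abs_continuous_on a b u \<longleftrightarrow>
     (\<forall>\<epsilon>>0. \<exists>\<delta>>0. \<forall>I :: (real \<times> real) set.
        finite I \<and> (\<forall>(p,q)\<in>I. a \<le> p \<and> p \<le> q \<and> q \<le> b)
        \<and> (\<forall>i\<in>I. \<forall>j\<in>I. i \<noteq> j \<longrightarrow> {fst i<..<snd i} \<inter> {fst j<..<snd j} = {})
        \<and> (\<Sum>(p,q)\<in>I. q - p) < \<delta>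
        \<longrightarrow> (\<Sum>(p,q)\<in>I. norm (u q - u p)) < \<epsilon>)"

end

theory Submission
  imports Defs
begin

definition LL :: "real set \<Rightarrow> (real \<Rightarrow> 'b::real_normed_vector) \<Rightarrow> real \<Rightarrow> bool" where
  "LL S f x \<longleftrightarrow> (\<exists>d>0. \<exists>B. \<forall>y\<in>S. dist y x < d \<longrightarrow> dist (f y) (f x) \<le> B * dist y x)"

lemma LL_const: "LL S (\<lambda>t. c) x"
  unfolding LL_def by (rule exI[of _ 1]) (auto intro!: exI[of _ 0])

lemma LL_subset: "LL S f x \<Longrightarrow> T \<subseteq> S \<Longrightarrow> LL T f x"
  unfolding LL_def by blast

lemma LL_add:
  assumes "LL S f x" "LL S g x"
  shows "LL S (\<lambda>t. f t + g t) x"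
proof -
  obtain d1 B1 where d1: "d1 > 0" "\<forall>y\<in>S. dist y x < d1 \<longrightarrow> dist (f y) (f x) \<le> B1 * dist y x"
    using assms(1) unfolding LL_def by blast
  obtain d2 B2 where d2: "d2 > 0" "\<forall>y\<in>S. dist y x < d2 \<longrightarrow> dist (g y) (g x) \<le> B2 * dist y x"
    using assms(2) unfolding LL_def by blast
  show ?thesis unfolding LL_def
  proof (rule exI[of _ "min d1 d2"], intro conjI exI[of _ "B1 + B2"] ballI impI)
    show "0 < min d1 d2" using d1 d2 by simp
    fix y assume y: "y \<in> S" "dist y x < min d1 d2"
    have "dist (f y + g y) (f x + g x) \<le> dist (f y) (f x) + dist (g y) (g x)"
      by (rule dist_triangle_add)
    also have "\<dots> \<le> B1 * dist y x + B2 * dist y x" using d1 d2 y by (intro add_mono) auto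
    finally show "dist (f y + g y) (f x + g x) \<le> (B1 + B2) * dist y x" by (simp add: algebra_simps)
  qed
qed

lemma LL_minus:
  assumes "LL S f x"
  shows "LL S (\<lambda>t. - f t) x"
  using assms unfolding LL_def by (simp add: dist_minus)

lemma LL_diff:
  assumes "LL S f x" "LL S g x"
  shows "LL S (\<lambda>t. f t - g t) x"
  using LL_add[OF assms(1) LL_minus[OF assms(2)]] by simp

lemma LL_inner:
  fixes f g :: "real \<Rightarrow> 'a::real_inner"
  assumes "LL S f x" "LL S g x"
  shows "LL S (\<lambda>t. inner (f t) (g t)) x"
proof -
  obtain d1 B1 where d1: "d1 > 0" "\<forall>y\<in>S. dist y x < d1 \<longrightarrow> dist (f y) (f x) \<le> B1 * dist y x"
    using assms(1) unfolding LL_def by blast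
  obtain d2 B2 where d2: "d2 > 0" "\<forall>y\<in>S. dist y x < d2 \<longrightarrow> dist (g y) (g x) \<le> B2 * dist y x"
    using assms(2) unfolding LL_def by blast
  define d where "d = min 1 (min d1 d2)"
  define C where "C = (norm (f x) + \<bar>B1\<bar>) * \<bar>B2\<bar> + norm (g x) * \<bar>B1\<bar>"
  show ?thesis unfolding LL_def
  proof (rule exI[of _ d], intro conjI exI[of _ C] ballI impI)
    show "0 < d" using d1 d2 by (simp add: d_def)
    fix y assume y: "y \<in> S" "dist y x < d"
    have dy: "dist y x \<le> 1" using y by (simp add: d_def)
    have e1: "norm (f y - f x) \<le> \<bar>B1\<bar> * dist y x"
      using d1 y by (auto simp: d_def dist_norm intro: order_trans[OF _ mult_right_mono[OF abs_ge_self]])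
    have e2: "norm (g y - g x) \<le> \<bar>B2\<bar> * dist y x"
      using d2 y by (auto simp: d_def dist_norm intro: order_trans[OF _ mult_right_mono[OF abs_ge_self]])
    have nf: "norm (f y) \<le> norm (f x) + \<bar>B1\<bar>"
    proof -
      have "norm (f y) \<le> norm (f x) + norm (f y - f x)" by (metis norm_triangle_sub add.commute)
      also have "norm (f y - f x) \<le> \<bar>B1\<bar>" using e1 dy
        by (metis abs_ge_zero mult_left_mono mult.right_neutral order_trans)
      finally show ?thesis by simp
    qed
    have eq: "inner (f y) (g y) - inner (f x) (g x) = inner (f y) (g y - g x) + inner (f y - f x) (g x)"
      by (simp add: inner_diff_left inner_diff_right)
    have "\<bar>inner (f y) (g y) - inner (f x) (g x)\<bar> \<le> norm (f y) * norm (g y - g x) + norm (f y - f x) * norm (g x)"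
      unfolding eq by (rule order_trans[OF abs_triangle_ineq add_mono]) (auto intro: Cauchy_Schwarz_ineq2)
    also have "\<dots> \<le> (norm (f x) + \<bar>B1\<bar>) * (\<bar>B2\<bar> * dist y x) + (\<bar>B1\<bar> * dist y x) * norm (g x)"
      by (intro add_mono mult_mono e1 e2 nf) auto
    also have "\<dots> = C * dist y x" by (simp add: C_def algebra_simps)
    finally show "dist (inner (f y) (g y)) (inner (f x) (g x)) \<le> C * dist y x"
      by (simp add: dist_real_def)
  qed
qed

lemma LL_mult:
  fixes f g :: "real \<Rightarrow> real"
  assumes "LL S f x" "LL S g x"
  shows "LL S (\<lambda>t. f t * g t) x"
  using LL_inner[OF assms] by (simp add: inner_real_def)

lemma LL_deriv:
  assumes "(f has_vector_derivative v) (at x within S)"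
  shows "LL S f x"
proof -
  have "(f has_derivative (\<lambda>h. h *\<^sub>R v)) (at x within S)"
    using assms by (simp add: has_vector_derivative_def)
  then obtain d where d: "d > 0" "\<forall>y\<in>S. norm (y - x) < d \<longrightarrow> norm (f y - f x - (y - x) *\<^sub>R v) \<le> 1 * norm (y - x)"
    unfolding has_derivative_within_alt by (meson zero_less_one)
  show ?thesis unfolding LL_def
  proof (rule exI[of _ d], intro conjI exI[of _ "norm v + 1"] ballI impI)
    fix y assume y: "y \<in> S" "dist y x < d"
    have "norm (f y - f x) \<le> norm (f y - f x - (y - x) *\<^sub>R v) + norm ((y - x) *\<^sub>R v)"
      using norm_triangle_ineq[of "f y - f x - (y - x) *\<^sub>R v" "(y - x) *\<^sub>R v"] by simp
    also have "\<dots> \<le> norm (y - x) + \<bar>y - x\<bar> * norm v" using d y by (auto simp: dist_norm)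
    finally show "dist (f y) (f x) \<le> (norm v + 1) * dist y x"
      by (simp add: dist_norm algebra_simps)
  qed (use d in auto)
qed

lemma LL_real_deriv:
  assumes "(f has_real_derivative v) (at x within S)"
  shows "LL S f x"
  using assms by (intro LL_deriv) (simp add: has_real_derivative_iff_has_vector_derivative)

lemma LL_continuous:
  assumes "LL S f x"
  shows "continuous (at x within S) f"
proof -
  obtain d B where d: "d > 0" "\<forall>y\<in>S. dist y x < d \<longrightarrow> dist (f y) (f x) \<le> B * dist y x"
    using assms unfolding LL_def by blast
  show ?thesis unfolding continuous_within_eps_delta
  proof (intro allI impI)
    fix e :: real assume e: "e > 0"
    show "\<exists>d'>0. \<forall>y\<in>S. dist y x < d' \<longrightarrow> dist (f y) (f x) < e"
    proof (intro exI[of _ "min d (e / (\<bar>B\<bar> + 1))"] conjI ballI impI)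
      show "0 < min d (e / (\<bar>B\<bar> + 1))" using d e by simp
      fix y assume y: "y \<in> S" "dist y x < min d (e / (\<bar>B\<bar> + 1))"
      have "dist (f y) (f x) \<le> B * dist y x" using d y by auto
      also have "\<dots> \<le> \<bar>B\<bar> * dist y x" by (simp add: mult_right_mono)
      also have "\<dots> < (\<bar>B\<bar> + 1) * (e / (\<bar>B\<bar> + 1))"
      proof -
        have "\<bar>B\<bar> * dist y x \<le> (\<bar>B\<bar> + 1) * dist y x" by (simp add: mult_right_mono)
        also have "\<dots> < (\<bar>B\<bar> + 1) * (e / (\<bar>B\<bar> + 1))"
          using y by (intro mult_strict_left_mono) (auto)
        finally show ?thesis .
      qed
      also have "\<dots> = e" by simp
      finally show "dist (f y) (f x) < e" .
    qed
  qed
qed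


lemma LL_continuous_on:
  assumes "\<And>t. t \<in> S \<Longrightarrow> LL S f t"
  shows "continuous_on S f"
  using assms LL_continuous continuous_on_eq_continuous_within by blast

lemma mono_ae:
  fixes \<phi> \<phi>' :: "real \<Rightarrow> real"
  assumes ab: "a \<le> b"
    and LLh: "\<And>t. t \<in> {a..b} \<Longrightarrow> LL {a..b} \<phi> t"
    and negN: "negligible N"
    and der: "\<And>t. a < t \<Longrightarrow> t < b \<Longrightarrow> t \<notin> N \<Longrightarrow> (\<phi> has_real_derivative \<phi>' t) (at t) \<and> \<phi>' t \<le> 0"
  shows "\<phi> b \<le> \<phi> a"
proof (rule ccontr)
  assume "\<not> \<phi> b \<le> \<phi> a"
  then have lt: "\<phi> a < \<phi> b" by simp
  with ab have ab': "a < b" by (cases "a = b") auto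
  define \<delta> where "\<delta> = (\<phi> b - \<phi> a) / (2 * (b - a))"
  have \<delta>pos: "\<delta> > 0" using lt ab' by (simp add: \<delta>_def)
  define \<psi> where "\<psi> t = \<phi> t - \<delta> * (t - a)" for t
  have psiab: "\<psi> a < \<psi> b"
  proof -
    have "\<delta> * (b - a) = (\<phi> b - \<phi> a) / 2" using ab' by (simp add: \<delta>_def field_simps)
    then show ?thesis using lt by (simp add: \<psi>_def)
  qed
  have LLpsi: "LL {a..b} \<psi> t" if "t \<in> {a..b}" for t
  proof -
    have "LL {a..b} (\<lambda>t. \<delta> * (t - a)) t"
      by (rule LL_real_deriv) (auto intro!: derivative_eq_intros)
    then show ?thesis unfolding \<psi>_def using LLh[OF that] by (intro LL_diff)
  qed
  have contpsi: "continuous_on {a..b} \<psi>" by (rule LL_continuous_on) (use LLpsi in auto)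
  define S where "S = N \<inter> {a..b}"
  have negS: "negligible (\<psi> ` S)"
  proof (rule negligible_locally_Lipschitz_image)
    show "DIM(real) \<le> DIM(real)" by simp
    show "negligible S" unfolding S_def using negN by (rule negligible_subset) auto
    fix x assume "x \<in> S"
    then obtain d B where d: "d > 0" "\<forall>y\<in>{a..b}. dist y x < d \<longrightarrow> dist (\<psi> y) (\<psi> x) \<le> B * dist y x"
      using LLpsi unfolding S_def LL_def by blast
    show "\<exists>T B. open T \<and> x \<in> T \<and> (\<forall>y\<in>S \<inter> T. norm (\<psi> y - \<psi> x) \<le> B * norm (y - x))"
      using d by (intro exI[of _ "ball x d"] exI[of _ B]) (auto simp: S_def dist_norm norm_minus_commute)
  qed
  have sub: "{\<psi> a<..<\<psi> b} \<subseteq> \<psi> ` S"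
  proof
    fix y assume y: "y \<in> {\<psi> a<..<\<psi> b}"
    define R where "R = {t \<in> {a..b}. \<psi> t = y}"
    have clR: "closed R" unfolding R_def by (rule continuous_closed_preimage_constant[OF contpsi]) auto
    have bdR: "bdd_above R" unfolding R_def by (auto intro: bdd_aboveI[of _ b])
    have neR: "R \<noteq> {}"
    proof -
      obtain t where "a \<le> t" "t \<le> b" "\<psi> t = y"
        using IVT'[of \<psi> a y b] y ab contpsi by auto
      then show ?thesis unfolding R_def by auto
    qed
    define c where "c = Sup R"
    have cR: "c \<in> R" unfolding c_def by (rule closed_contains_Sup[OF neR bdR clR])
    have upper: "t \<le> c" if "t \<in> R" for t unfolding c_def by (rule cSup_upper[OF that bdR])
    have ca: "c \<noteq> a" using cR y by (auto simp: R_def)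
    have cb: "c \<noteq> b" using cR y by (auto simp: R_def)
    have c_in: "a < c" "c < b" using cR ca cb by (auto simp: R_def)
    have "c \<in> N"
    proof (rule ccontr)
      assume "c \<notin> N"
      with der[OF c_in] have d1: "(\<phi> has_real_derivative \<phi>' c) (at c)" "\<phi>' c \<le> 0" by auto
      have "(\<psi> has_real_derivative (\<phi>' c - \<delta>)) (at c)"
        unfolding \<psi>_def using d1(1) by (auto intro!: derivative_eq_intros)
      moreover have "\<phi>' c - \<delta> < 0" using d1(2) \<delta>pos by simp
      ultimately obtain d where d: "d > 0" "\<forall>h>0. h < d \<longrightarrow> \<psi> c > \<psi> (c + h)"
        using DERIV_neg_dec_right by blast
      define h where "h = min (d / 2) ((b - c) / 2)"
      have h: "h > 0" "h < d" "c + h < b" using d c_in unfolding h_def by (auto simp: min_def field_simps)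
      have "\<psi> (c + h) < y" using d h cR by (auto simp: R_def)
      moreover have "\<psi> b > y" using y by simp
      moreover have "continuous_on {c + h..b} \<psi>"
        by (rule continuous_on_subset[OF contpsi]) (use c_in h in auto)
      ultimately obtain t where t: "c + h \<le> t" "t \<le> b" "\<psi> t = y"
        using IVT'[of \<psi> "c + h" y b] h by auto
      then have "t \<in> R" using c_in h by (auto simp: R_def)
      then have "t \<le> c" by (rule upper)
      then show False using t h by simp
    qed
    then show "y \<in> \<psi> ` S" using cR unfolding S_def R_def by auto
  qed
  have "negligible {\<psi> a<..<\<psi> b}" by (rule negligible_subset[OF negS sub])
  moreover have "box (\<psi> a) (\<psi> b) \<noteq> {}" using psiab by simp
  ultimately show False using negligible_interval(2)[of "\<psi> a" "\<psi> b"] by (simp add: box_real)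
qed


lemma grad_ineq:
  fixes f :: "'a::real_inner \<Rightarrow> real"
  assumes cv: "convex_on UNIV f"
    and d: "(f has_derivative (\<lambda>h. inner gx h)) (at x)"
  shows "inner gx (x - z) \<ge> f x - f z"
proof -
  define \<phi> where "\<phi> s = f (x + s *\<^sub>R (z - x))" for s :: real
  have cvphi: "convex_on UNIV \<phi>"
  proof (rule convex_onI)
    fix t a b :: real assume t: "0 < t" "t < 1"
    have eq: "x + ((1 - t) *\<^sub>R a + t *\<^sub>R b) *\<^sub>R (z - x) =
        (1 - t) *\<^sub>R (x + a *\<^sub>R (z - x)) + t *\<^sub>R (x + b *\<^sub>R (z - x))"
      by (simp add: algebra_simps)
    show "\<phi> ((1 - t) *\<^sub>R a + t *\<^sub>R b) \<le> (1 - t) * \<phi> a + t * \<phi> b"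
      unfolding \<phi>_def eq using t by (intro convex_onD[OF cv]) auto
  qed simp
  have "((\<lambda>s. x + s *\<^sub>R (z - x)) has_derivative (\<lambda>s. s *\<^sub>R (z - x))) (at 0)"
    by (auto intro!: derivative_eq_intros)
  moreover have "(f has_derivative (\<lambda>h. inner gx h)) (at (x + 0 *\<^sub>R (z - x)))" using d by simp
  ultimately have "(\<phi> has_derivative (\<lambda>s. inner gx (s *\<^sub>R (z - x)))) (at 0)"
    unfolding \<phi>_def by (rule has_derivative_compose[of "\<lambda>s. x + s *\<^sub>R (z - x)"])
  then have "(\<phi> has_field_derivative inner gx (z - x)) (at 0 within UNIV)"
    by (simp add: has_field_derivative_def mult.commute[of _ "inner gx (z - x)"])
  from convex_on_imp_above_tangent[OF cvphi _ _ _ this, of 1]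
  have "\<phi> 1 - \<phi> 0 \<ge> inner gx (z - x) * (1 - 0)" by simp
  then show ?thesis by (simp add: \<phi>_def inner_diff_right)
qed

lemma real_ineq_aux:
  fixes a b :: real
  assumes b: "b \<ge> 0" and h: "\<And>s. 0 < s \<Longrightarrow> s \<le> 1 \<Longrightarrow> 0 \<le> 2 * s * a + s ^ 2 * b"
  shows "0 \<le> a"
proof (rule ccontr)
  assume "\<not> 0 \<le> a" then have a: "a < 0" by simp
  define s where "s = min 1 (- a / (b + 1))"
  have "- a / (b + 1) > 0" using a b by (intro divide_pos_pos) auto
  then have s: "0 < s" "s \<le> 1" by (auto simp: s_def)
  have "s * b \<le> (- a / (b + 1)) * b" using b by (intro mult_right_mono) (auto simp: s_def)
  also have "\<dots> \<le> - a" using a b by (simp add: field_simps)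
  finally have "2 * a + s * b < 0" using a by simp
  then have "s * (2 * a + s * b) < 0" using s by (simp add: mult_pos_neg)
  moreover have "s * (2 * a + s * b) = 2 * s * a + s ^ 2 * b" by (simp add: algebra_simps power2_eq_square)
  ultimately show False using h[OF s] by simp
qed

lemma proj_facts:
  fixes G :: "'a::real_inner set" and v y :: 'a and \<beta> :: real
  assumes fin: "finite G" and ne: "G \<noteq> {}"
    and eq: "\<beta> *\<^sub>R v + proj ((\<lambda>c. c + y) ` (convex hull G)) 0 = 0"
  shows "(\<forall>w\<in>G. inner v (w + y) * \<beta> \<le> - \<beta> * \<beta> * (norm v)^2) \<and> (\<exists>c\<in>convex hull G. y = - \<beta> *\<^sub>R v - c)"
proof -
  define K where "K = (\<lambda>c. c + y) ` (convex hull G)"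
  have cK: "compact K" unfolding K_def
    by (intro compact_continuous_image finite_imp_compact_convex_hull fin) (auto intro!: continuous_intros)
  have neK: "K \<noteq> {}" using ne unfolding K_def by simp
  have "continuous_on K (\<lambda>w. (norm (w - 0))^2)" by (intro continuous_intros)
  then obtain w0 where "w0 \<in> K" "\<forall>w\<in>K. (norm (w0 - 0))^2 \<le> (norm (w - 0))^2"
    using continuous_attains_inf[OF cK neK] by blast
  then have ex: "\<exists>w. w \<in> K \<and> (\<forall>v\<in>K. (norm (w - 0)) ^ 2 \<le> (norm (v - 0)) ^ 2)" by blast
  define p where "p = proj K 0"
  have p: "p \<in> K" "\<forall>v\<in>K. (norm (p - 0)) ^ 2 \<le> (norm (v - 0)) ^ 2"
    using someI_ex[OF ex] unfolding p_def proj_def by auto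
  have pv: "p = - \<beta> *\<^sub>R v" using eq unfolding p_def K_def
    by (simp add: eq_neg_iff_add_eq_0 add.commute)
  obtain c where c: "c \<in> convex hull G" "p = c + y" using p(1) unfolding K_def by auto
  have part2: "y = - \<beta> *\<^sub>R v - c" using c pv by (simp add: algebra_simps)
  have "inner v (w + y) * \<beta> \<le> - \<beta> * \<beta> * (norm v)^2" if w: "w \<in> G" for w
  proof -
    define dd where "dd = w - c"
    have key: "0 \<le> 2 * s * inner p dd + s ^ 2 * (norm dd)^2" if s: "0 < s" "s \<le> 1" for s
    proof -
      have "(1 - s) *\<^sub>R c + s *\<^sub>R w \<in> convex hull G"
        using c(1) w s by (intro convexD[OF convex_convex_hull]) (auto intro: hull_inc)
      then have "(1 - s) *\<^sub>R c + s *\<^sub>R w + y \<in> K" unfolding K_def by auto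
      moreover have "(1 - s) *\<^sub>R c + s *\<^sub>R w + y = p + s *\<^sub>R dd"
        using c(2) by (simp add: dd_def algebra_simps)
      ultimately have "(norm p)^2 \<le> (norm (p + s *\<^sub>R dd))^2" using p(2) by fastforce
      also have "\<dots> = (norm p)^2 + 2 * s * inner p dd + s^2 * (norm dd)^2"
        by (simp only: power2_norm_eq_inner inner_add_left inner_add_right inner_scaleR_left inner_scaleR_right inner_commute[of dd p]) (simp add: algebra_simps power2_eq_square)
      finally show ?thesis by simp
    qed
    have "0 \<le> inner p dd" by (rule real_ineq_aux[OF _ key]) auto
    moreover have "dd = w + y + \<beta> *\<^sub>R v" unfolding dd_def part2 by (simp add: algebra_simps)
    ultimately have "0 \<le> inner (- \<beta> *\<^sub>R v) (w + y + \<beta> *\<^sub>R v)" using pv by metis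
    then show ?thesis
      by (simp add: inner_add_right power2_norm_eq_inner algebra_simps)
  qed
  with part2 c(1) show ?thesis by blast
qed


lemma vd_inner:
  fixes u w :: "real \<Rightarrow> 'a::real_inner"
  assumes "(u has_vector_derivative u') (at r within S)" "(w has_vector_derivative w') (at r within S)"
  shows "((\<lambda>t. inner (u t) (w t)) has_real_derivative (inner (u r) w' + inner u' (w r))) (at r within S)"
proof -
  have "((\<lambda>t. inner (u t) (w t)) has_derivative (\<lambda>h. inner (u r) (h *\<^sub>R w') + inner (h *\<^sub>R u') (w r))) (at r within S)"
    using assms unfolding has_vector_derivative_def by (rule has_derivative_inner)
  moreover have "(\<lambda>h. inner (u r) (h *\<^sub>R w') + inner (h *\<^sub>R u') (w r)) = (\<lambda>h. h * (inner (u r) w' + inner u' (w r)))"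
    by (auto simp: algebra_simps)
  ultimately show ?thesis by (simp add: has_field_derivative_def mult.commute[of _ "inner (u r) w' + inner u' (w r)"])
qed

lemma vd_comp:
  fixes f :: "'a::real_inner \<Rightarrow> real"
  assumes "(x has_vector_derivative v) (at r within S)" "(f has_derivative (\<lambda>h. inner gg h)) (at (x r))"
  shows "((\<lambda>t. f (x t)) has_real_derivative inner gg v) (at r within S)"
proof -
  have "((\<lambda>t. f (x t)) has_derivative (\<lambda>h. inner gg (h *\<^sub>R v))) (at r within S)"
    using has_derivative_compose[OF assms(1)[unfolded has_vector_derivative_def] assms(2)] by simp
  moreover have "(\<lambda>h. inner gg (h *\<^sub>R v)) = (\<lambda>h. h * inner gg v)" by auto
  ultimately show ?thesis by (simp add: has_field_derivative_def mult.commute[of _ "inner gg v"])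
qed

lemma bounded_on_Icc:
  fixes f :: "real \<Rightarrow> 'b::real_normed_vector"
  assumes "continuous_on {a..b} f"
  shows "\<exists>B\<ge>0. \<forall>t\<in>{a..b}. norm (f t) \<le> B"
proof -
  have "bounded (f ` {a..b})" by (intro compact_imp_bounded compact_continuous_image assms compact_Icc)
  then obtain B where "B > 0" "\<forall>y\<in>f ` {a..b}. norm y \<le> B" by (auto simp: bounded_pos)
  then show ?thesis by (intro exI[of _ B]) auto
qed


theorem lemma4p6:
  fixes m :: nat
    and f :: "nat \<Rightarrow> 'a::{real_inner,complete_space} \<Rightarrow> real"
    and g :: "nat \<Rightarrow> 'a \<Rightarrow> 'a"
    and \<alpha> t\<^sub>0 :: real
    and x\<^sub>0 :: 'a
    and x x' x'' :: "real \<Rightarrow> 'a"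
  assumes m_pos: "m > 0"
    and f_convex: "\<And>i. i < m \<Longrightarrow> convex_on UNIV (f i)"
    and f_grad: "\<And>i y. i < m \<Longrightarrow> (f i has_derivative (\<lambda>h. g i y \<bullet> h)) (at y)"
    and g_cont: "\<And>i. i < m \<Longrightarrow> continuous_on UNIV (g i)"
    and \<alpha>_pos: "\<alpha> > 0"
    and t0_pos: "t\<^sub>0 > 0"
    and x_deriv: "\<And>t. t \<ge> t\<^sub>0 \<Longrightarrow> (x has_vector_derivative x' t) (at t within {t\<^sub>0..})"
    and x'_cont: "continuous_on {t\<^sub>0..} x'"
    and x'_ac: "\<And>T. T \<ge> t\<^sub>0 \<Longrightarrow> abs_continuous_on t\<^sub>0 T x'"
    and x''_int: "\<And>t. t \<ge> t\<^sub>0 \<Longrightarrow> x'' integrable_on {t\<^sub>0..t}"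
    and x'_eq: "\<And>t. t \<ge> t\<^sub>0 \<Longrightarrow> x' t = x' t\<^sub>0 + integral {t\<^sub>0..t} x''"
    and x''_deriv: "AE t in lborel. t \<ge> t\<^sub>0 \<longrightarrow> (x' has_vector_derivative x'' t) (at t)"
    and equation: "AE t in lborel. t > t\<^sub>0 \<longrightarrow>
        (\<alpha> / t) *\<^sub>R x' t
        + proj ((\<lambda>c. c + x'' t) ` (convex hull {g i (x t) | i. i < m})) 0 = 0"
    and init_x: "x t\<^sub>0 = x\<^sub>0"
    and init_x': "x' t\<^sub>0 = 0"
  shows "\<exists>A B :: real. \<forall>z :: 'a. \<forall>\<tau> > t\<^sub>0.
     (MIN i\<in>{..<m}. f i (x \<tau>) + (1/2) * (norm (x' \<tau>)) ^ 2 - f i z)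
       * (\<tau> * ln \<tau> + A * \<tau> + B)
     \<le> ((\<alpha> + 1) * (1 / t\<^sub>0 ^ 2) * ((1/2) * (norm (x t\<^sub>0 - z)) ^ 2)
          + (3 / (2 * \<alpha>)) * (MAX i\<in>{..<m}. f i x\<^sub>0 - f i z)) * (\<tau> - t\<^sub>0)
       + ((1/2) * (norm (x t\<^sub>0 - z)) ^ 2) / t\<^sub>0"
proof -
  have AEg: "AE t in lborel. t > t\<^sub>0 \<longrightarrow> ((x' has_vector_derivative x'' t) (at t) \<and>
        (\<alpha> / t) *\<^sub>R x' t + proj ((\<lambda>c. c + x'' t) ` (convex hull {g i (x t) | i. i < m})) 0 = 0)"
    using x''_deriv equation by eventually_elim auto
  then obtain N0 where N0: "{t \<in> space lborel. \<not> (t > t\<^sub>0 \<longrightarrow> ((x' has_vector_derivative x'' t) (at t) \<and>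
        (\<alpha> / t) *\<^sub>R x' t + proj ((\<lambda>c. c + x'' t) ` (convex hull {g i (x t) | i. i < m})) 0 = 0))} \<subseteq> N0"
      "emeasure lborel N0 = 0" "N0 \<in> sets lborel"
    by (rule AE_E)
  have negN: "negligible N0"
    using N0(2,3) by (simp add: negligible_iff_null_sets null_sets_completionI null_setsI)
  have good: "(x' has_vector_derivative x'' t) (at t) \<and>
        (\<alpha> / t) *\<^sub>R x' t + proj ((\<lambda>c. c + x'' t) ` (convex hull {g i (x t) | i. i < m})) 0 = 0"
    if "t > t\<^sub>0" "t \<notin> N0" for t
    using N0(1) that by auto
  have finG: "finite {g i (x t) | i. i < m}" for t
  proof -
    have "{g i (x t) | i. i < m} = (\<lambda>i. g i (x t)) ` {..<m}" by auto
    then show ?thesis by simp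
  qed
  have neG: "{g i (x t) | i. i < m} \<noteq> {}" for t using m_pos by auto
  have PF: "(\<forall>i<m. inner (x' t) (g i (x t) + x'' t) \<le> - (\<alpha> / t) * (norm (x' t))^2) \<and>
      (\<exists>c\<in>convex hull {g i (x t) | i. i < m}. x'' t = - (\<alpha> / t) *\<^sub>R x' t - c)"
    if t: "t > t\<^sub>0" "t \<notin> N0" for t
  proof -
    have b: "\<alpha> / t > 0" using t t0_pos \<alpha>_pos by simp
    from proj_facts[OF finG neG conjunct2[OF good[OF t]]]
    have pf: "(\<forall>w\<in>{g i (x t) | i. i < m}. inner (x' t) (w + x'' t) * (\<alpha> / t) \<le> - (\<alpha> / t) * (\<alpha> / t) * (norm (x' t))^2)"
      "(\<exists>c\<in>convex hull {g i (x t) | i. i < m}. x'' t = - (\<alpha> / t) *\<^sub>R x' t - c)" by auto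
    have "inner (x' t) (g i (x t) + x'' t) \<le> - (\<alpha> / t) * (norm (x' t))^2" if "i < m" for i
    proof -
      have "inner (x' t) (g i (x t) + x'' t) * (\<alpha> / t) \<le> (- (\<alpha> / t) * (norm (x' t))^2) * (\<alpha> / t)"
        using pf(1) that by (auto simp: algebra_simps)
      then show ?thesis using b by (metis mult_right_le_imp_le)
    qed
    with pf(2) show ?thesis by blast
  qed
  have xder_at: "(x has_vector_derivative x' t) (at t)" if "t > t\<^sub>0" for t
  proof -
    have "at t within {t\<^sub>0..} = at t" by (rule at_within_interior) (use that in simp)
    moreover have "(x has_vector_derivative x' t) (at t within {t\<^sub>0..})" using x_deriv[of t] that by simp
    ultimately show ?thesis by simp
  qed
  have xcont: "continuous_on {t\<^sub>0..} x"
    unfolding continuous_on_eq_continuous_within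
  proof
    fix t assume "t \<in> {t\<^sub>0..}"
    then show "continuous (at t within {t\<^sub>0..}) x"
      by (intro has_vector_derivative_continuous[OF x_deriv]) simp
  qed
  have gsum_cont: "continuous_on {t\<^sub>0..} (\<lambda>t. \<Sum>i<m. norm (g i (x t)))"
    by (intro continuous_intros continuous_on_compose2[OF g_cont xcont]) auto
  have hull_bound: "norm c \<le> (\<Sum>i<m. norm (g i (x t)))" if "c \<in> convex hull {g i (x t) | i. i < m}" for c t
  proof -
    have "{g i (x t) | i. i < m} \<subseteq> cball 0 (\<Sum>i<m. norm (g i (x t)))"
    proof
      fix w assume "w \<in> {g i (x t) | i. i < m}"
      then obtain i where i: "i < m" "w = g i (x t)" by auto
      have "norm (g i (x t)) \<le> (\<Sum>i<m. norm (g i (x t)))"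
        using i by (intro member_le_sum) auto
      then show "w \<in> cball 0 (\<Sum>i<m. norm (g i (x t)))" using i by simp
    qed
    then have "convex hull {g i (x t) | i. i < m} \<subseteq> cball 0 (\<Sum>i<m. norm (g i (x t)))"
      by (intro hull_minimal convex_cball)
    then show ?thesis using that by auto
  qed
  have x'lip: "\<exists>L. \<forall>s\<in>{t\<^sub>0..T}. \<forall>t\<in>{t\<^sub>0..T}. norm (x' t - x' s) \<le> L * \<bar>t - s\<bar>" if T: "T \<ge> t\<^sub>0" for T
  proof -
    have c1: "continuous_on {t\<^sub>0..T} x'" by (rule continuous_on_subset[OF x'_cont]) auto
    have c2: "continuous_on {t\<^sub>0..T} (\<lambda>t. \<Sum>i<m. norm (g i (x t)))"
      by (rule continuous_on_subset[OF gsum_cont]) auto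
    obtain Bv where Bv: "Bv \<ge> 0" "\<forall>t\<in>{t\<^sub>0..T}. norm (x' t) \<le> Bv"
      using bounded_on_Icc[OF c1] by blast
    obtain Bg where Bg: "Bg \<ge> 0" "\<forall>t\<in>{t\<^sub>0..T}. norm (\<Sum>i<m. norm (g i (x t))) \<le> Bg"
      using bounded_on_Icc[OF c2] by blast
    define L where "L = \<alpha> / t\<^sub>0 * Bv + Bg"
    have L0: "L \<ge> 0" unfolding L_def using Bv(1) Bg(1) \<alpha>_pos t0_pos by (intro add_nonneg_nonneg mult_nonneg_nonneg divide_nonneg_nonneg) auto
    have one: "norm (x' t - x' s) \<le> L * (t - s)" if st: "t\<^sub>0 \<le> s" "s \<le> t" "t \<le> T" for s t
    proof -
      define y where "y r = (if r \<in> N0 \<union> {t\<^sub>0} then 0 else x'' r)" for r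
      have negN': "negligible (N0 \<union> {t\<^sub>0})" using negN by simp
      have ybound: "norm (y r) \<le> L" if r: "r \<in> {t\<^sub>0..T}" for r
      proof (cases "r \<in> N0 \<union> {t\<^sub>0}")
        case True then show ?thesis using L0 by (simp add: y_def)
      next
        case False
        then have r': "r > t\<^sub>0" "r \<notin> N0" "r \<le> T" using r by auto
        then obtain c where c: "c \<in> convex hull {g i (x r) | i. i < m}" "x'' r = - (\<alpha> / r) *\<^sub>R x' r - c"
          using PF by blast
        have "norm (x'' r) \<le> norm ((\<alpha> / r) *\<^sub>R x' r) + norm c"
          unfolding c(2) using norm_triangle_ineq4[of "- ((\<alpha> / r) *\<^sub>R x' r)" c] by simp
        also have "norm ((\<alpha> / r) *\<^sub>R x' r) \<le> \<alpha> / t\<^sub>0 * Bv"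
        proof -
          have "norm ((\<alpha> / r) *\<^sub>R x' r) = \<alpha> / r * norm (x' r)" using r' \<alpha>_pos t0_pos by simp
          also have "\<dots> \<le> \<alpha> / t\<^sub>0 * Bv"
            using r' \<alpha>_pos t0_pos Bv by (intro mult_mono frac_le) auto
          finally show ?thesis .
        qed
        also have "norm c \<le> Bg"
        proof -
          have "r \<in> {t\<^sub>0..T}" using r' by simp
          then have "norm (\<Sum>i<m. norm (g i (x r))) \<le> Bg" using Bg(2) by blast
          then show ?thesis using hull_bound[OF c(1)] by simp
        qed
        finally show ?thesis using False by (simp add: y_def L_def)
      qed
      define w where "w = x' t - x' s"
      define \<phi> where "\<phi> r = inner (y r) w" for r
      have hy: "(y has_integral integral {t\<^sub>0..u} x'') {t\<^sub>0..u}" if "u \<ge> t\<^sub>0" for u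
        by (rule has_integral_spike[OF negN' _ integrable_integral[OF x''_int[OF that]]]) (auto simp: y_def)
      have hphi: "(\<phi> has_integral inner (integral {t\<^sub>0..u} x'') w) {t\<^sub>0..u}" if "u \<ge> t\<^sub>0" for u
        using has_integral_linear[OF hy[OF that] bounded_linear_inner_left[of w]] unfolding \<phi>_def[abs_def] by (simp add: o_def)
      have iphi: "\<phi> integrable_on {t\<^sub>0..t}" using hphi[of t] st by (auto simp: integrable_on_def)
      have "integral {t\<^sub>0..s} \<phi> + integral {s..t} \<phi> = integral {t\<^sub>0..t} \<phi>"
        by (rule Henstock_Kurzweil_Integration.integral_combine[OF st(1,2) iphi])
      moreover have "integral {t\<^sub>0..t} \<phi> = inner (integral {t\<^sub>0..t} x'') w"
        using hphi[of t] st by (simp add: integral_unique)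
      moreover have "integral {t\<^sub>0..s} \<phi> = inner (integral {t\<^sub>0..s} x'') w"
        using hphi[of s] st by (simp add: integral_unique)
      ultimately have "integral {s..t} \<phi> = inner (integral {t\<^sub>0..t} x'' - integral {t\<^sub>0..s} x'') w"
        by (simp add: inner_diff_left)
      also have "integral {t\<^sub>0..t} x'' - integral {t\<^sub>0..s} x'' = w"
        using x'_eq[of t] x'_eq[of s] st by (simp add: w_def)
      finally have ww: "integral {s..t} \<phi> = inner w w" .
      have iphi2: "\<phi> integrable_on {s..t}"
        by (rule integrable_on_subinterval[OF iphi]) (use st in auto)
      have pb: "norm (\<phi> r) \<le> L * norm w" if "r \<in> cbox s t" for r
      proof -
        have "norm (\<phi> r) \<le> norm (y r) * norm w" unfolding \<phi>_def real_norm_def by (rule Cauchy_Schwarz_ineq2)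
        also have "\<dots> \<le> L * norm w" using ybound[of r] that st by (intro mult_right_mono) auto
        finally show ?thesis .
      qed
      have "norm (integral {s..t} \<phi>) \<le> (L * norm w) * (t - s)"
      proof -
        have B0: "0 \<le> L * norm w" using L0 by simp
        have "(\<phi> has_integral integral {s..t} \<phi>) (cbox s t)"
          using iphi2 by (simp add: cbox_interval integrable_integral)
        from has_integral_bound[OF B0 this pb] show ?thesis using st by (simp add: cbox_interval content_real)
      qed
      then have "(norm w)^2 \<le> (L * (t - s)) * norm w"
        using ww st by (simp add: content_real power2_norm_eq_inner algebra_simps)
      then show ?thesis
        using L0 st by (cases "norm w = 0") (auto simp: power2_eq_square w_def mult_le_cancel_right_pos)
    qed
    show ?thesis
    proof (intro exI[of _ L] ballI)
      fix s t assume st: "s \<in> {t\<^sub>0..T}" "t \<in> {t\<^sub>0..T}"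
      show "norm (x' t - x' s) \<le> L * \<bar>t - s\<bar>"
      proof (cases "s \<le> t")
        case True
        then have "norm (x' t - x' s) \<le> L * (t - s)" using one[of s t] st by simp
        then show ?thesis using True by simp
      next
        case False
        then have "norm (x' s - x' t) \<le> L * (s - t)" using one[of t s] st by simp
        then show ?thesis using False by (simp add: norm_minus_commute)
      qed
    qed
  qed
  have LLx': "LL {t\<^sub>0..} x' t" if tt: "t \<ge> t\<^sub>0" for t
  proof -
    have "t + 1 \<ge> t\<^sub>0" using tt by simp
    from x'lip[OF this] obtain L where L: "\<forall>s\<in>{t\<^sub>0..t+1}. \<forall>r\<in>{t\<^sub>0..t+1}. norm (x' r - x' s) \<le> L * \<bar>r - s\<bar>"
      by blast
    show ?thesis unfolding LL_def
    proof (rule exI[of _ 1], intro conjI exI[of _ L] ballI impI)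
      fix y assume y: "y \<in> {t\<^sub>0..}" "dist y t < 1"
      then show "dist (x' y) (x' t) \<le> L * dist y t"
        using L tt by (auto simp: dist_norm dist_real_def)
    qed simp
  qed
  have LLx: "LL {t\<^sub>0..} x t" if "t \<ge> t\<^sub>0" for t
    using x_deriv[OF that] by (rule LL_deriv)
  have fxder: "((\<lambda>t. f i (x t)) has_real_derivative inner (g i (x t)) (x' t)) (at t within {t\<^sub>0..})"
    if "t \<ge> t\<^sub>0" "i < m" for t i
    by (rule vd_comp[OF x_deriv[OF that(1)] f_grad[OF that(2)]])
  have fxder_at: "((\<lambda>t. f i (x t)) has_real_derivative inner (g i (x t)) (x' t)) (at t)"
    if "t > t\<^sub>0" "i < m" for t i
    by (rule vd_comp[OF xder_at[OF that(1)] f_grad[OF that(2)]])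
  have LLfx: "LL {t\<^sub>0..} (\<lambda>t. f i (x t)) t" if "t \<ge> t\<^sub>0" "i < m" for t i
    using fxder[OF that] by (rule LL_real_deriv)
  define W where "W i t = f i (x t) + (1/2) * (norm (x' t))^2" for i t
  have Wi: "W i t = f i (x t) + (1/2) * inner (x' t) (x' t)" for i t
    by (simp add: W_def power2_norm_eq_inner)
  have LLW: "LL {t\<^sub>0..} (W i) t" if "t \<ge> t\<^sub>0" "i < m" for t i
    unfolding Wi by (intro LL_add LL_mult LL_inner LL_const LLfx LLx' that)
  have Wder: "(W i has_real_derivative (inner (g i (x t)) (x' t) + (1/2) * (inner (x' t) (x'' t) + inner (x'' t) (x' t)))) (at t)"
    if "t > t\<^sub>0" "t \<notin> N0" "i < m" for t i
  proof -
    have d2: "(x' has_vector_derivative x'' t) (at t)" using good[OF that(1,2)] by blast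
    show ?thesis unfolding Wi
      by (intro DERIV_add DERIV_cmult fxder_at that vd_inner d2)
  qed
  have Wmono: "W i t2 \<le> W i t1" if "t\<^sub>0 \<le> t1" "t1 \<le> t2" "i < m" for i t1 t2
  proof (rule mono_ae[OF that(2) _ negN])
    fix t assume "t \<in> {t1..t2}"
    then show "LL {t1..t2} (W i) t" using LLW[of t i] that by (auto intro: LL_subset)
  next
    fix t assume t: "t1 < t" "t < t2" "t \<notin> N0"
    have tt: "t > t\<^sub>0" using t that by simp
    have "inner (x' t) (g i (x t) + x'' t) \<le> - (\<alpha> / t) * (norm (x' t))^2" using PF[OF tt t(3)] that by blast
    also have "\<dots> \<le> 0" using \<alpha>_pos tt t0_pos by (simp add: mult_nonneg_nonneg)
    finally have "inner (g i (x t)) (x' t) + (1/2) * (inner (x' t) (x'' t) + inner (x'' t) (x' t)) \<le> 0"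
      by (simp add: inner_add_right inner_commute)
    with Wder[OF tt t(3) that(3)]
    show "(W i has_real_derivative (inner (g i (x t)) (x' t) + (1/2) * (inner (x' t) (x'' t) + inner (x'' t) (x' t)))) (at t) \<and>
        inner (g i (x t)) (x' t) + (1/2) * (inner (x' t) (x'' t) + inner (x'' t) (x' t)) \<le> 0" by blast
  qed
  define c3 where "c3 = 3 / (2 * \<alpha>)"
  have c3pos: "c3 > 0" using \<alpha>_pos by (simp add: c3_def)
  define A where "A = -1 - ln t\<^sub>0 + c3"
  define B where "B = t\<^sub>0 - c3 * t\<^sub>0"
  have xzder: "((\<lambda>t. x t - z) has_vector_derivative x' t) F" if "(x has_vector_derivative x' t) F" for t z F
    using has_vector_derivative_diff[OF that has_vector_derivative_const[of z]] by simp
  have dhhgen: "((\<lambda>t. (1/2) * inner (x t - z) (x t - z)) has_real_derivative inner (x t - z) (x' t)) (at t within S)"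
    if "(x has_vector_derivative x' t) (at t within S)" for t z S
  proof -
    have "((\<lambda>t. (1/2) * inner (x t - z) (x t - z)) has_real_derivative
        (1/2) * (inner (x t - z) (x' t) + inner (x' t) (x t - z))) (at t within S)"
      by (intro DERIV_cmult vd_inner xzder that)
    then show ?thesis by (rule DERIV_cong) (simp add: inner_commute)
  qed
  have dinv: "((\<lambda>t. 1 / t) has_real_derivative (0 * t - 1 * 1) / (t * t)) (at t within S)" if "t \<noteq> 0" for t S
    by (rule DERIV_divide[OF DERIV_const DERIV_ident that])
  have dinv2: "((\<lambda>t. 1 / t^2) has_real_derivative (0 * t^2 - 1 * (real 2 * t ^ (2 - Suc 0))) / (t^2 * t^2)) (at t within S)"
    if "t \<noteq> 0" for t S
    by (rule DERIV_divide[OF DERIV_const DERIV_pow]) (use that in simp)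
  show ?thesis
  proof (rule exI[of _ A], rule exI[of _ B], intro allI impI)
    fix z :: 'a and \<tau> :: real
    assume tau: "\<tau> > t\<^sub>0"
    define M where "M = (MIN i\<in>{..<m}. f i (x \<tau>) + (1/2) * (norm (x' \<tau>))^2 - f i z)"
    define Mx where "Mx = (MAX i\<in>{..<m}. f i x\<^sub>0 - f i z)"
    define hh where "hh t = (1/2) * inner (x t - z) (x t - z)" for t
    define u where "u t = inner (x t - z) (x' t)" for t
    define Cz where "Cz = (\<alpha> + 1) * (1 / t\<^sub>0^2) * hh t\<^sub>0 + c3 * Mx"
    have hh_eq: "hh t = (1/2) * (norm (x t - z))^2" for t by (simp add: hh_def power2_norm_eq_inner)
    have hh0: "hh t \<ge> 0" for t by (simp add: hh_eq)
    have M_le: "M \<le> W i t - f i z" if "i < m" "t\<^sub>0 \<le> t" "t \<le> \<tau>" for i t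
    proof -
      have "M \<le> W i \<tau> - f i z" unfolding M_def W_def using that(1) by (intro Min_le) auto
      also have "W i \<tau> \<le> W i t" using Wmono[of t \<tau> i] that by simp
      finally show ?thesis by simp
    qed
    have Mx_ge: "f i x\<^sub>0 - f i z \<le> Mx" if "i < m" for i unfolding Mx_def using that by (intro Max_ge) auto
    have cineq: "inner (x t - z) c \<ge> M - (1/2) * (norm (x' t))^2"
      if c: "c \<in> convex hull {g i (x t) | i. i < m}" and t: "t\<^sub>0 \<le> t" "t \<le> \<tau>" for c t
    proof -
      have "{g i (x t) | i. i < m} \<subseteq> {w. inner (x t - z) w \<ge> M - (1/2) * (norm (x' t))^2}"
      proof
        fix w assume "w \<in> {g i (x t) | i. i < m}"
        then obtain i where i: "i < m" "w = g i (x t)" by auto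
        have "inner (g i (x t)) (x t - z) \<ge> f i (x t) - f i z"
          by (rule grad_ineq[OF f_convex[OF i(1)] f_grad[OF i(1)]])
        moreover have "M \<le> W i t - f i z" using M_le[OF i(1) t] .
        ultimately show "w \<in> {w. inner (x t - z) w \<ge> M - (1/2) * (norm (x' t))^2}"
          using i by (simp add: W_def inner_commute)
      qed
      then have "convex hull {g i (x t) | i. i < m} \<subseteq> {w. inner (x t - z) w \<ge> M - (1/2) * (norm (x' t))^2}"
        by (intro hull_minimal convex_halfspace_ge)
      then show ?thesis using c by auto
    qed
    define \<Phi> where "\<Phi> t = u t / t + (\<alpha> + 1) * (hh t / t^2) + M * ln t + c3 * W 0 t" for t
    define D\<Phi> where "D\<Phi> t = ((inner (x t - z) (x'' t) + inner (x' t) (x' t)) * t - u t * 1) / (t * t)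
        + (\<alpha> + 1) * ((u t * t^2 - hh t * (real 2 * t ^ (2 - Suc 0))) / (t^2 * t^2))
        + M * inverse t
        + c3 * (inner (g 0 (x t)) (x' t) + (1/2) * (inner (x' t) (x'' t) + inner (x'' t) (x' t)))" for t
    have \<Phi>der: "(\<Phi> has_real_derivative D\<Phi> t) (at t)" if t: "t > t\<^sub>0" "t \<notin> N0" for t
    proof -
      have tpos: "t > 0" using t t0_pos by simp
      have d2: "(x' has_vector_derivative x'' t) (at t)" using good[OF t] by blast
      have du: "(u has_real_derivative (inner (x t - z) (x'' t) + inner (x' t) (x' t))) (at t)"
        unfolding u_def[abs_def] by (intro vd_inner xzder xder_at d2 t)
      have dh: "(hh has_real_derivative u t) (at t)"
        unfolding hh_def[abs_def] u_def by (intro dhhgen xder_at t)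
      have e1: "((\<lambda>t. u t / t) has_real_derivative ((inner (x t - z) (x'' t) + inner (x' t) (x' t)) * t - u t * 1) / (t * t)) (at t)"
        by (rule DERIV_divide[OF du DERIV_ident]) (use tpos in simp)
      have e2: "((\<lambda>t. hh t / t^2) has_real_derivative (u t * t^2 - hh t * (real 2 * t ^ (2 - Suc 0))) / (t^2 * t^2)) (at t)"
        by (rule DERIV_divide[OF dh DERIV_pow]) (use tpos in simp)
      have e3: "(ln has_real_derivative inverse t) (at t)" by (rule DERIV_ln[OF tpos])
      have e4: "(W 0 has_real_derivative (inner (g 0 (x t)) (x' t) + (1/2) * (inner (x' t) (x'' t) + inner (x'' t) (x' t)))) (at t)"
        by (rule Wder[OF t m_pos])
      show ?thesis unfolding \<Phi>_def[abs_def] D\<Phi>_def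
        by (intro DERIV_add DERIV_cmult e1 e2 e3 e4)
    qed
    have D\<Phi>neg: "D\<Phi> t \<le> 0" if t: "t > t\<^sub>0" "t \<le> \<tau>" "t \<notin> N0" for t
    proof -
      have tpos: "t > 0" using t t0_pos by simp
      obtain c where c: "c \<in> convex hull {g i (x t) | i. i < m}" "x'' t = - (\<alpha> / t) *\<^sub>R x' t - c"
        using PF[OF t(1,3)] by blast
      have i0: "inner (x' t) (g 0 (x t) + x'' t) \<le> - (\<alpha> / t) * (norm (x' t))^2"
        using PF[OF t(1,3)] m_pos by blast
      define q where "q = inner (x' t) (x' t)"
      have qn: "(norm (x' t))^2 = q" by (simp add: q_def power2_norm_eq_inner)
      have ci: "inner (x t - z) c \<ge> M - (1/2) * q" using cineq[OF c(1)] t qn by simp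
      have P: "inner (x t - z) (x'' t) = - (\<alpha> / t) * u t - inner (x t - z) c"
        unfolding c(2) u_def by (simp add: inner_diff_right)
      have Q: "inner (g 0 (x t)) (x' t) + (1/2) * (inner (x' t) (x'' t) + inner (x'' t) (x' t))
          = inner (x' t) (g 0 (x t) + x'' t)" by (simp add: inner_add_right inner_commute)
      have Qle: "c3 * (inner (g 0 (x t)) (x' t) + (1/2) * (inner (x' t) (x'' t) + inner (x'' t) (x' t)))
          \<le> c3 * (- (\<alpha> / t) * q)"
        unfolding Q using i0 qn c3pos by (intro mult_left_mono) auto
      have c3a: "c3 * (- (\<alpha> / t) * q) = - (3/2) * (q / t)"
        using \<alpha>_pos by (simp add: c3_def field_simps)
      have t1: "((inner (x t - z) (x'' t) + q) * t - u t * 1) / (t * t)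
          = (inner (x t - z) (x'' t) + q) / t - u t / t^2"
        using tpos by (simp add: field_simps power2_eq_square)
      have t1le: "(inner (x t - z) (x'' t) + q) / t \<le> (- (\<alpha> / t) * u t - M + (3/2) * q) / t"
        using tpos P ci by (intro divide_right_mono) auto
      have t1eq: "(- (\<alpha> / t) * u t - M + (3/2) * q) / t = - \<alpha> * (u t / t^2) - M / t + (3/2) * (q / t)"
        using tpos by (simp add: field_simps power2_eq_square)
      have t2: "(\<alpha> + 1) * ((u t * t^2 - hh t * (real 2 * t ^ (2 - Suc 0))) / (t^2 * t^2))
          = (\<alpha> + 1) * (u t / t^2) - 2 * (\<alpha> + 1) * (hh t / t^3)"
        using tpos by (simp add: field_simps power2_eq_square power3_eq_cube)
      have t3: "M * inverse t = M / t" by (simp add: divide_inverse)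
      have t4: "hh t / t^3 \<ge> 0" using hh0 tpos by simp
      have "D\<Phi> t = (inner (x t - z) (x'' t) + q) / t - u t / t^2
          + ((\<alpha> + 1) * (u t / t^2) - 2 * (\<alpha> + 1) * (hh t / t^3)) + M / t
          + c3 * (inner (g 0 (x t)) (x' t) + (1/2) * (inner (x' t) (x'' t) + inner (x'' t) (x' t)))"
        unfolding D\<Phi>_def q_def[symmetric] t1 t2 t3 by simp
      also have "\<dots> \<le> (- \<alpha> * (u t / t^2) - M / t + (3/2) * (q / t)) - u t / t^2
          + ((\<alpha> + 1) * (u t / t^2) - 2 * (\<alpha> + 1) * (hh t / t^3)) + M / t - (3/2) * (q / t)"
        using t1le t1eq Qle c3a by linarith
      also have "\<dots> = - 2 * (\<alpha> + 1) * (hh t / t^3)" using tpos by (simp add: field_simps)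
      also have "\<dots> \<le> 0"
      proof -
        have "0 \<le> 2 * (\<alpha> + 1) * (hh t / t^3)" using t4 \<alpha>_pos by (intro mult_nonneg_nonneg) auto
        moreover have "- 2 * (\<alpha> + 1) * (hh t / t^3) = - (2 * (\<alpha> + 1) * (hh t / t^3))" by (simp only: mult_minus_left)
        ultimately show ?thesis by linarith
      qed
      finally show ?thesis .
    qed
    show "(MIN i\<in>{..<m}. f i (x \<tau>) + (1/2) * (norm (x' \<tau>)) ^ 2 - f i z)
       * (\<tau> * ln \<tau> + A * \<tau> + B)
     \<le> ((\<alpha> + 1) * (1 / t\<^sub>0 ^ 2) * ((1/2) * (norm (x t\<^sub>0 - z)) ^ 2)
          + (3 / (2 * \<alpha>)) * (MAX i\<in>{..<m}. f i x\<^sub>0 - f i z)) * (\<tau> - t\<^sub>0)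
       + ((1/2) * (norm (x t\<^sub>0 - z)) ^ 2) / t\<^sub>0"
    proof -
      have LLu: "LL {t\<^sub>0..} u t" if "t \<ge> t\<^sub>0" for t
        unfolding u_def[abs_def] by (intro LL_inner LL_diff LLx LLx' LL_const that)
      have LLhh: "LL {t\<^sub>0..} hh t" if "t \<ge> t\<^sub>0" for t
        unfolding hh_def[abs_def] by (intro LL_mult LL_inner LL_diff LLx LL_const that)
      have LLinv: "LL {t\<^sub>0..} (\<lambda>t. 1 / t) t" if "t \<ge> t\<^sub>0" for t
        by (rule LL_real_deriv[OF dinv]) (use that t0_pos in auto)
      have LLinv2: "LL {t\<^sub>0..} (\<lambda>t. 1 / t^2) t" if "t \<ge> t\<^sub>0" for t
        by (rule LL_real_deriv[OF dinv2]) (use that t0_pos in auto)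
      have LLln: "LL {t\<^sub>0..} ln t" if "t \<ge> t\<^sub>0" for t
        by (rule LL_real_deriv[OF has_field_derivative_at_within[OF DERIV_ln]]) (use that t0_pos in auto)
      have LLid: "LL {t\<^sub>0..} (\<lambda>t. t) t" for t
        by (rule LL_real_deriv[OF DERIV_ident])
      have \<Phi>eq: "\<Phi> = (\<lambda>t. u t * (1 / t) + (\<alpha> + 1) * (hh t * (1 / t^2)) + M * ln t + c3 * W 0 t)"
        by (auto simp: \<Phi>_def[abs_def])
      have LL\<Phi>: "LL {t\<^sub>0..} \<Phi> t" if "t \<ge> t\<^sub>0" for t
        unfolding \<Phi>eq by (intro LL_add LL_mult LL_const LLu LLhh LLinv LLinv2 LLln LLW that m_pos)
      have \<Phi>mono: "\<Phi> s \<le> \<Phi> t\<^sub>0" if s: "t\<^sub>0 \<le> s" "s \<le> \<tau>" for s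
      proof (rule mono_ae[OF s(1) _ negN])
        fix t assume "t \<in> {t\<^sub>0..s}"
        then show "LL {t\<^sub>0..s} \<Phi> t" using LL\<Phi>[of t] by (auto intro: LL_subset)
      next
        fix t assume t: "t\<^sub>0 < t" "t < s" "t \<notin> N0"
        show "(\<Phi> has_real_derivative D\<Phi> t) (at t) \<and> D\<Phi> t \<le> 0"
          using \<Phi>der[OF t(1,3)] D\<Phi>neg[of t] t s by auto
      qed
      have ut0: "u t\<^sub>0 = 0" by (simp add: u_def init_x')
      have W0t0: "W 0 t\<^sub>0 = f 0 x\<^sub>0" by (simp add: W_def init_x init_x')
      have step3: "u s / s \<le> Cz - M * (ln s - ln t\<^sub>0 + c3)" if s: "t\<^sub>0 \<le> s" "s \<le> \<tau>" for s
      proof -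
        have spos: "s > 0" using s t0_pos by simp
        have "\<Phi> s \<le> \<Phi> t\<^sub>0" by (rule \<Phi>mono[OF s])
        moreover have "\<Phi> t\<^sub>0 = (\<alpha> + 1) * (hh t\<^sub>0 / t\<^sub>0^2) + M * ln t\<^sub>0 + c3 * f 0 x\<^sub>0"
          by (simp add: \<Phi>_def ut0 W0t0)
        moreover have "(\<alpha> + 1) * (hh s / s^2) \<ge> 0" using hh0[of s] \<alpha>_pos spos by simp
        moreover have "c3 * W 0 s \<ge> c3 * (M + f 0 z)"
          using M_le[OF m_pos s] c3pos by (intro mult_left_mono) auto
        moreover have "c3 * (f 0 x\<^sub>0 - f 0 z) \<le> c3 * Mx"
          using Mx_ge[OF m_pos] c3pos by (intro mult_left_mono) auto
        moreover have "Cz = (\<alpha> + 1) * (hh t\<^sub>0 / t\<^sub>0^2) + c3 * Mx" by (simp add: Cz_def)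
        ultimately show ?thesis unfolding \<Phi>_def by (simp add: algebra_simps)
      qed
      define \<Gamma> where "\<Gamma> s = hh s / s - Cz * s + M * (s * ln s - s - ln t\<^sub>0 * s + c3 * s)" for s
      define D\<Gamma> where "D\<Gamma> s = u s / s - hh s / s^2 - Cz + M * (ln s - ln t\<^sub>0 + c3)" for s
      have \<Gamma>der: "(\<Gamma> has_real_derivative D\<Gamma> s) (at s within S)"
        if s: "s \<ge> t\<^sub>0" "(x has_vector_derivative x' s) (at s within S)" for s S
      proof -
        have spos: "s > 0" using s t0_pos by simp
        have dh: "(hh has_real_derivative u s) (at s within S)"
          unfolding hh_def[abs_def] u_def by (intro dhhgen s)
        have dln: "(ln has_real_derivative inverse s) (at s within S)"
          by (rule has_field_derivative_at_within[OF DERIV_ln[OF spos]])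
        have "(\<Gamma> has_real_derivative ((u s * s - hh s * 1) / (s * s) - Cz * 1
            + M * ((1 * ln s + inverse s * s) - 1 - ln t\<^sub>0 * 1 + c3 * 1))) (at s within S)"
          unfolding \<Gamma>_def[abs_def]
          by (intro DERIV_add DERIV_diff DERIV_cmult DERIV_mult DERIV_divide dh dln DERIV_ident DERIV_const)
            (use spos in simp)
        then show ?thesis
          by (rule DERIV_cong) (use spos in \<open>simp add: D\<Gamma>_def field_simps power2_eq_square\<close>)
      qed
      have \<Gamma>mono: "\<Gamma> \<tau> \<le> \<Gamma> t\<^sub>0"
      proof (rule mono_ae[OF less_imp_le[OF tau] _ negligible_empty])
        fix t assume t: "t \<in> {t\<^sub>0..\<tau>}"
        have "(x has_vector_derivative x' t) (at t within {t\<^sub>0..\<tau>})"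
          using x_deriv[of t] t by (auto intro: has_vector_derivative_within_subset)
        then show "LL {t\<^sub>0..\<tau>} \<Gamma> t" using t by (intro LL_real_deriv[OF \<Gamma>der]) auto
      next
        fix t assume t: "t\<^sub>0 < t" "t < \<tau>" "t \<notin> {}"
        have "(\<Gamma> has_real_derivative D\<Gamma> t) (at t)" using \<Gamma>der[of t UNIV] xder_at[of t] t by simp
        moreover have "D\<Gamma> t \<le> 0"
        proof -
          have "u t / t \<le> Cz - M * (ln t - ln t\<^sub>0 + c3)" using step3[of t] t by simp
          moreover have "hh t / t^2 \<ge> 0" using hh0[of t] by simp
          ultimately show ?thesis by (simp add: D\<Gamma>_def)
        qed
        ultimately show "(\<Gamma> has_real_derivative D\<Gamma> t) (at t) \<and> D\<Gamma> t \<le> 0" by blast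
      qed
      have tpos: "\<tau> > 0" using tau t0_pos by simp
      have "M * (\<tau> * ln \<tau> + A * \<tau> + B) = M * (\<tau> * ln \<tau> - \<tau> - \<tau> * ln t\<^sub>0 + c3 * \<tau>)
          - M * (t\<^sub>0 * ln t\<^sub>0 - t\<^sub>0 - t\<^sub>0 * ln t\<^sub>0 + c3 * t\<^sub>0)"
        by (simp add: A_def B_def algebra_simps)
      also have "\<dots> \<le> Cz * (\<tau> - t\<^sub>0) + hh t\<^sub>0 / t\<^sub>0 - hh \<tau> / \<tau>"
        using \<Gamma>mono by (simp add: \<Gamma>_def algebra_simps)
      also have "\<dots> \<le> Cz * (\<tau> - t\<^sub>0) + hh t\<^sub>0 / t\<^sub>0"
        using hh0[of \<tau>] tpos by simp
      finally show ?thesis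
        unfolding M_def[symmetric] Cz_def Mx_def[symmetric] c3_def[symmetric] hh_eq by simp
    qed
  qed
qed
end
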